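(* Let $y\in W^{1,1}_{\mathrm{loc}}([0,\infty);\mathbb{R})$ with $y\ge0$ on $[0,\infty)$, $\delta\in(0,1)$, $\alpha>0$, $T_0>0$, and set $$y_\star=\big(\alpha\,\delta^\delta(1-\delta)\big)^{\frac1{1-\delta}},\qquad x_\star=\big(\alpha\,\delta(1-\delta)T_0\big)^{\frac1{1-\delta}}.$$ If $y(0)\le x_\star$ and if for almost every $t>0$, $$y'(t)+\alpha y(t)^\delta\le y_\star(T_0-t)_+^{\frac{\delta}{1-\delta}},$$ then $y(t)=0$ for every $t\ge T_0$.
   Context: $x_+=\max\{x,0\}$. *)

theory Defs
  imports "HOL-Analysis.Analysis"
begin

text \<open>y belongs to W^{1,1}_loc([0,oo)) (continuous representative) with weak derivative g:
  g is Lebesgue integrable on every bounded interval [0,t] and y is the primitive of g.\<close>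
definition W11_loc_deriv :: "(real \<Rightarrow> real) \<Rightarrow> (real \<Rightarrow> real) \<Rightarrow> bool" where
  "W11_loc_deriv y g \<longleftrightarrow>
     (\<forall>t\<ge>0. set_integrable lborel {0..t} g \<and>
             y t = y 0 + (LINT s:{0..t}|lborel. g s))"

end

theory Submission imports Defs begin

lemma alg:
  fixes d a :: real
  assumes "0<d" "d<1" "0<a"
  defines "q \<equiv> 1/(1-d)"
  defines "c \<equiv> (a*d*(1-d)) powr q"
  shows "a * c powr d = (a * d powr d * (1 - d)) powr q + q * c"
proof -
  define K where "K = a*d*(1-d)"
  have K: "K > 0" using assms unfolding K_def by simp
  have qd: "q * d = q - 1" using assms unfolding q_def by (simp add: field_simps)
  have q1: "q = 1 + q*d" using qd by simp
  have cd: "c powr d = K powr (q*d)" unfolding c_def K_def[symmetric] using K by (simp add: powr_powr)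
  have "(a * d powr d * (1 - d)) powr q = a powr q * d powr (q*d) * (1-d) powr q"
    using assms by (simp add: powr_mult powr_powr mult.commute)
  also have "\<dots> = a * (1-d) * (a powr (q*d) * d powr (q*d) * (1-d) powr (q*d))"
    using assms by (subst (1 3) q1) (simp add: powr_add)
  also have "\<dots> = a*(1-d) * K powr (q*d)"
    using assms unfolding K_def by (simp add: powr_mult)
  finally have ys: "(a * d powr d * (1 - d)) powr q = a*(1-d) * K powr (q*d)" .
  have "c = K * K powr (q*d)" unfolding c_def K_def[symmetric] using K by (subst q1) (simp add: powr_add)
  hence "q*c = a*d*K powr (q*d)" using assms unfolding K_def q_def by (simp add: field_simps)
  thus ?thesis using ys cd by (simp add: algebra_simps)
qed
theorem lemma5p2:
  fixes y g :: "real \<Rightarrow> real" and \<delta> \<alpha> T0 :: real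
  assumes "W11_loc_deriv y g"
    and "\<forall>t\<ge>0. y t \<ge> 0"
    and "0 < \<delta>" "\<delta> < 1" "0 < \<alpha>" "0 < T0"
    and "y 0 \<le> (\<alpha> * \<delta> * (1 - \<delta>) * T0) powr (1 / (1 - \<delta>))"
    and "AE t in lborel. t > 0 \<longrightarrow>
           g t + \<alpha> * y t powr \<delta>
             \<le> (\<alpha> * \<delta> powr \<delta> * (1 - \<delta>)) powr (1 / (1 - \<delta>))
                * (max (T0 - t) 0) powr (\<delta> / (1 - \<delta>))"
  shows "\<forall>t\<ge>T0. y t = 0"
proof -
  note W = assms(1)[unfolded W11_loc_deriv_def]
  define q where "q = 1/(1-\<delta>)"
  define p where "p = \<delta>/(1-\<delta>)"
  define c where "c = (\<alpha>*\<delta>*(1-\<delta>)) powr q"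
  define ys where "ys = (\<alpha> * \<delta> powr \<delta> * (1 - \<delta>)) powr q"
  define z where "z t = c * (T0 - t) powr q" for t
  define z' where "z' t = - (q*c) * (T0 - t) powr p" for t
  have q1: "q - 1 = p" "q > 0" "p > 0" "q * \<delta> = p"
    using assms(3,4) unfolding q_def p_def by (auto simp: field_simps)
  have c0: "c > 0" using assms(3-5) unfolding c_def by simp
  have alg': "\<alpha> * c powr \<delta> = ys + q * c"
    using alg[OF assms(3,4,5)] unfolding c_def ys_def q_def by simp
  have AEs: "AE t in lborel. t > 0 \<longrightarrow> g t + \<alpha> * y t powr \<delta> \<le> ys * (max (T0 - t) 0) powr p"
    using assms(8) unfolding ys_def q_def p_def .
  have sint: "set_integrable lborel {s..t} g" if "0 \<le> s" for s t
  proof (cases "s \<le> t")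
    case True
    have "set_integrable lborel {0..t} g" using W that True by auto
    then show ?thesis by (rule set_integrable_subset) (use that in auto)
  next
    case False
    then show ?thesis by (simp add: set_integrable_def)
  qed
  have Lint: "(LINT x:{s..t}|lborel. g x) = integral {s..t} g" if "0 \<le> s" for s t
    using set_borel_integral_eq_integral(2)[OF sint[OF that]] .
  have hint: "g integrable_on {s..t}" if "0 \<le> s" for s t
    using set_borel_integral_eq_integral(1)[OF sint[OF that]] .
  have ydef: "y t = y 0 + integral {0..t} g" if "0 \<le> t" for t
  proof -
    have "y t = y 0 + (LINT x:{0..t}|lborel. g x)" using W that by blast
    then show ?thesis using Lint[of 0 t] by simp
  qed
  have ydiff: "y t - y s = integral {s..t} g" if "0 \<le> s" "s \<le> t" for s t
  proof -
    have "integral {0..s} g + integral {s..t} g = integral {0..t} g"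
      using Henstock_Kurzweil_Integration.integral_combine[OF that hint[of 0 t]] by simp
    moreover have "y s = y 0 + integral {0..s} g" "y t = y 0 + integral {0..t} g"
      using ydef[of s] ydef[of t] that by auto
    ultimately show ?thesis by linarith
  qed
  have ycont: "continuous_on {0..b} y" for b
  proof -
    have "continuous_on {0..b} (\<lambda>x. y 0 + integral {0..x} g)"
      by (intro continuous_intros indefinite_integral_continuous_1 hint) simp
    moreover have "\<And>x. x \<in> {0..b} \<Longrightarrow> y 0 + integral {0..x} g = y x"
      using ydef by (metis atLeastAtMost_iff)
    ultimately show ?thesis using continuous_on_cong by (metis (no_types, lifting))
  qed
  have zcont: "continuous_on {..T0} z"
    unfolding z_def using q1 by (intro continuous_intros continuous_on_powr') auto
  have z'cont: "continuous_on {..T0} z'"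
    unfolding z'_def using q1 by (intro continuous_intros continuous_on_powr') auto
  have zder: "(z has_vector_derivative z' t) (at t)" if "t < T0" for t
  proof -
    have "((\<lambda>t. (T0 - t) powr q) has_real_derivative (q * (T0 - t) powr (q-1)) * (-1)) (at t)"
    proof -
      have "((\<lambda>t. T0 - t) has_real_derivative -1) (at t)" by (auto intro!: derivative_eq_intros)
      from DERIV_fun_powr[OF this, of q] that show ?thesis by simp
    qed
    then have "(z has_real_derivative c * ((q * (T0 - t) powr (q-1)) * (-1))) (at t)"
      unfolding z_def by (intro DERIV_cmult)
    then show ?thesis unfolding z'_def using q1
      by (simp add: has_real_derivative_iff_has_vector_derivative[symmetric] algebra_simps)
  qed
  have zeq: "z' t = ys * (max (T0 - t) 0) powr p - \<alpha> * z t powr \<delta>" if "t < T0" for t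
  proof -
    have "z t powr \<delta> = c powr \<delta> * (T0 - t) powr p"
      unfolding z_def using that c0 q1 by (simp add: powr_mult powr_powr)
    moreover have "max (T0 - t) 0 = T0 - t" using that by simp
    moreover have "ys * (T0 - t) powr p - \<alpha> * (c powr \<delta> * (T0 - t) powr p)
       = (ys - \<alpha> * c powr \<delta>) * (T0 - t) powr p" by (simp add: algebra_simps)
    ultimately show ?thesis unfolding z'_def using alg' by simp
  qed
  have z0: "z 0 = (\<alpha> * \<delta> * (1 - \<delta>) * T0) powr (1 / (1 - \<delta>))"
    unfolding z_def c_def q_def using assms(3-6) by (simp add: powr_mult)
  have zT: "z T0 = 0" unfolding z_def by simp
  have znn: "z t \<ge> 0" for t unfolding z_def using c0 by simp
  have cmp: "y t \<le> z t" if t: "0 \<le> t" "t \<le> T0" for t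
  proof (rule ccontr)
    assume "\<not> y t \<le> z t"
    hence yt: "y t > z t" by simp
    define S where "S = {0..t} \<inter> (\<lambda>s. y s - z s) -` {..0}"
    have "continuous_on {0..t} (\<lambda>s. y s - z s)"
      using ycont continuous_on_subset[OF zcont, of "{0..t}"] t
      by (intro continuous_intros) auto
    hence clS: "closed S" unfolding S_def by (intro continuous_closed_preimage) auto
    have "0 \<in> S" unfolding S_def using t assms(7) z0 by simp
    hence SS: "Sup S \<in> S" using clS by (intro closed_contains_Sup) (auto simp: S_def bdd_above_def)
    define t0 where "t0 = Sup S"
    have t0: "0 \<le> t0" "t0 \<le> t" "y t0 \<le> z t0" using SS unfolding t0_def S_def by auto
    have t0t: "t0 < t" using t0 yt by (cases "t0 = t") auto
    have above: "y s > z s" if "t0 < s" "s \<le> t" for s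
    proof (rule ccontr)
      assume "\<not> z s < y s"
      hence "s \<in> S" unfolding S_def using that t0 by auto
      hence "s \<le> t0" unfolding t0_def by (intro cSup_upper) (auto simp: S_def bdd_above_def)
      thus False using that by simp
    qed
    have zi: "(z' has_integral (z t - z t0)) {t0..t}"
      using t0 t0t t
      by (intro fundamental_theorem_of_calculus_interior zder continuous_on_subset[OF zcont]) auto
    have z'si: "set_integrable lborel {t0..t} z'"
      using t by (intro borel_integrable_atLeastAtMost' continuous_on_subset[OF z'cont]) auto
    have AE2: "AE x\<in>{t0..t} in lborel. g x \<le> z' x"
      using AEs AE_lborel_singleton[of t0] AE_lborel_singleton[of t]
    proof eventually_elim
      case (elim x)
      show ?case
      proof
        assume x: "x \<in> {t0..t}"
        with elim have x2: "t0 < x" "x < t" by auto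
        have yz: "z x < y x" using above x2 by simp
        have "z x powr \<delta> \<le> y x powr \<delta>" using yz znn assms(3) by (intro powr_mono2) auto
        then show "g x \<le> z' x" using elim(1) x2 t0 t zeq[of x] assms(5)
          proof -
            have "\<alpha> * z x powr \<delta> \<le> \<alpha> * y x powr \<delta>" using \<open>z x powr \<delta> \<le> y x powr \<delta>\<close> assms(5) by simp
            moreover have "g x + \<alpha> * y x powr \<delta> \<le> ys * max (T0 - x) 0 powr p" using elim(1) x2 t0 by simp
            moreover have "z' x = ys * max (T0 - x) 0 powr p - \<alpha> * z x powr \<delta>" using zeq[of x] x2 t by simp
            ultimately show ?thesis by linarith
          qed
      qed
    qed
    have "y t - y t0 \<le> z t - z t0"
    proof -
      have "y t - y t0 = (LINT x:{t0..t}|lborel. g x)" using ydiff[of t0 t] Lint[of t0 t] t0 t0t by simp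
      also have "\<dots> \<le> (LINT x:{t0..t}|lborel. z' x)"
        by (rule set_integral_mono_AE[OF sint z'si AE2]) (use t0 in simp)
      also have "\<dots> = z t - z t0"
        using set_borel_integral_eq_integral(2)[OF z'si] zi by (simp add: integral_unique)
      finally show ?thesis .
    qed
    thus False using yt t0 by simp
  qed
  show ?thesis
  proof (intro allI impI)
    fix t assume tT: "T0 \<le> t"
    have "y T0 \<le> 0" using cmp[of T0] zT assms(6) by simp
    have AE3: "AE x\<in>{T0..t} in lborel. g x \<le> 0"
      using AEs AE_lborel_singleton[of T0]
    proof eventually_elim
      case (elim x)
      show ?case
      proof
        assume x: "x \<in> {T0..t}"
        with elim have x2: "T0 < x" by auto
        have "max (T0 - x) 0 = 0" using x2 by simp
        moreover have "y x powr \<delta> \<ge> 0" by simp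
        ultimately show "g x \<le> 0" using elim(1) x2 assms(5,6)
proof -
            have "g x + \<alpha> * y x powr \<delta> \<le> 0" using elim(1) x2 assms(6) \<open>max (T0 - x) 0 = 0\<close> by simp
            moreover have "\<alpha> * y x powr \<delta> \<ge> 0" using assms(5) by simp
            ultimately show ?thesis by linarith
          qed
      qed
    qed
    have "y t - y T0 = (LINT x:{T0..t}|lborel. g x)" using ydiff[of T0 t] Lint[of T0 t] tT assms(6) by simp
    also have "\<dots> \<le> (LINT x:{T0..t}|lborel. 0)"
      by (rule set_integral_mono_AE[OF sint _ AE3]) (use assms(6) in \<open>auto simp: set_integrable_def\<close>)
    also have "\<dots> = 0" by simp
    finally have "y t \<le> 0" using \<open>y T0 \<le> 0\<close> by simp
    moreover have "y t \<ge> 0" using assms(2) tT assms(6) by simp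
    ultimately show "y t = 0" by simp
  qed
qed

end
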